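(* Let $F$ be the elementary cellular automaton with rule number 132. Then $D(\textsc{Pred}_{F,n})=O(\log n)$.
   Context: An elementary cellular automaton (ECA) with rule number $N\in\{0,\dots,255\}$ is the map $F:\{0,1\}^{\mathbb Z}\to\{0,1\}^{\mathbb Z}$ given by $F(x)_i=f(x_{i-1},x_i,x_{i+1})$. Here the local rule $f:\{0,1\}^3\to\{0,1\}$ is determined by $N=\sum_{a,b,c\in\{0,1\}}2^{4a+2b+c}f(a,b,c)$. On a finite word of length $m\ge 3$, $F$ produces the word of length $m-2$ obtained by applying $f$ at every position whose full neighbourhood lies in the word. For $n\ge1$, $\textsc{Pred}_{F,n}:\{0,1\}^{2n+1}\to\{0,1\}$ maps a word $x=x_{-n}\cdots x_n$ to the single letter of $F^n(x)$, i.e. the state of the central cell after $n$ steps. For a function $g:X\times Y\to Z$, $D(g)$ is the minimal depth of a deterministic two-party protocol computing $g$. In such a protocol, Alice knows $x$ and Bob knows $y$. The protocol is a binary tree: each internal node is labelled by a function of Alice's input only or of Bob's input only, with values in $\{\text{left},\text{right}\}$, and each leaf is labelled by an output value. For $g:\{0,1\}^m\to Z$, set $D(g)=\max_{0\le i<m}D(g_i)$, where $g_i:\{0,1\}^i\times\{0,1\}^{m-i}\to Z$ is $g_i(x,y)=g(xy)$. *)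

theory Defs
  imports Complex_Main "HOL-Library.Landau_Symbols"
begin

definition eca_local :: "nat \<Rightarrow> bool \<Rightarrow> bool \<Rightarrow> bool \<Rightarrow> bool" where
  "eca_local N a b c = bit N (4 * of_bool a + 2 * of_bool b + of_bool c)"

definition eca_step :: "nat \<Rightarrow> bool list \<Rightarrow> bool list" where
  "eca_step N w = map (\<lambda>i. eca_local N (w ! i) (w ! (i+1)) (w ! (i+2))) [0..<length w - 2]"

(* Pred_{F,n}: word x_{-n}..x_n (list of length 2n+1, index k = cell k-n) to the letter of F^n(x) *)
definition pred :: "nat \<Rightarrow> nat \<Rightarrow> bool list \<Rightarrow> bool" where
  "pred N n x = hd ((eca_step N ^^ n) x)"

datatype ('x, 'y, 'z) protocol =
    Leaf 'z
  | AliceNode "'x \<Rightarrow> bool" "('x, 'y, 'z) protocol" "('x, 'y, 'z) protocol"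
  | BobNode "'y \<Rightarrow> bool" "('x, 'y, 'z) protocol" "('x, 'y, 'z) protocol"

fun run :: "('x, 'y, 'z) protocol \<Rightarrow> 'x \<Rightarrow> 'y \<Rightarrow> 'z" where
  "run (Leaf z) x y = z"
| "run (AliceNode a l r) x y = (if a x then run l x y else run r x y)"
| "run (BobNode b l r) x y = (if b y then run l x y else run r x y)"

fun depth :: "('x, 'y, 'z) protocol \<Rightarrow> nat" where
  "depth (Leaf z) = 0"
| "depth (AliceNode a l r) = Suc (max (depth l) (depth r))"
| "depth (BobNode b l r) = Suc (max (depth l) (depth r))"

definition comm_complexity :: "'x set \<Rightarrow> 'y set \<Rightarrow> ('x \<Rightarrow> 'y \<Rightarrow> 'z) \<Rightarrow> nat" where
  "comm_complexity X Y g =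
     (LEAST d. \<exists>p :: ('x, 'y, 'z) protocol. depth p = d \<and> (\<forall>x\<in>X. \<forall>y\<in>Y. run p x y = g x y))"

definition word_comm_complexity :: "nat \<Rightarrow> (bool list \<Rightarrow> 'z) \<Rightarrow> nat" where
  "word_comm_complexity m g =
     Max ((\<lambda>i. comm_complexity {x. length x = i} {y. length y = m - i} (\<lambda>x y. g (x @ y))) ` {0..<m})"

end

theory Submission
  imports Defs "HOL-Real_Asymp.Real_Asymp"
begin

lemma loc132: "eca_local 132 a b c = (b \<and> (a = c))"
  by (cases a; cases b; cases c) (simp_all add: eca_local_def bit_iff_odd)

lemma step_len: "length (eca_step N w) = length w - 2"
  by (simp add: eca_step_def)

lemma step_nth: "i < length w - 2 \<Longrightarrow> eca_step 132 w ! i = (w!(i+1) \<and> (w!i = w!(i+2)))"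
  by (simp add: eca_step_def loc132)

definition Lc :: "bool list \<Rightarrow> nat \<Rightarrow> nat" where
  "Lc w p = length (takeWhile id (rev (take p w)))"
definition Rc :: "bool list \<Rightarrow> nat \<Rightarrow> nat" where
  "Rc w p = length (takeWhile id (drop (Suc p) w))"

lemma Lc_rec: "0 < p \<Longrightarrow> p \<le> length w \<Longrightarrow> Lc w p = (if w!(p-1) then Suc (Lc w (p-1)) else 0)"
proof -
  assume "0 < p" "p \<le> length w"
  then have "take p w = take (p-1) w @ [w!(p-1)]"
    by (metis Suc_diff_1 Suc_le_lessD take_Suc_conv_app_nth)
  then show ?thesis by (simp add: Lc_def)
qed

lemma Rc_rec: "Suc p < length w \<Longrightarrow> Rc w p = (if w!(Suc p) then Suc (Rc w (Suc p)) else 0)"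
  by (simp add: Rc_def Cons_nth_drop_Suc[symmetric])

lemma comb_arith:
  fixes a b c :: bool and A B t :: nat
  shows "((b \<and> min (if a then Suc A else 0) t = min (if c then Suc B else 0) t) \<and>
    ((a \<and> min A t = min (if b then Suc (if c then Suc B else 0) else 0) t) =
     (c \<and> min (if b then Suc (if a then Suc A else 0) else 0) t = min B t)))
   = (b \<and> min (if a then Suc A else 0) (Suc t) = min (if c then Suc B else 0) (Suc t))"
  unfolding min_def by (cases a; cases b; cases c) (auto split: if_splits)

lemma comb:
  assumes "0 < p" "Suc p < length w"
  shows "((w!p \<and> min (Lc w p) t = min (Rc w p) t) \<and>
    ((w!(p-1) \<and> min (Lc w (p-1)) t = min (Rc w (p-1)) t) =
     (w!(Suc p) \<and> min (Lc w (Suc p)) t = min (Rc w (Suc p)) t)))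
   = (w!p \<and> min (Lc w p) (Suc t) = min (Rc w p) (Suc t))"
proof -
  have 1: "Lc w p = (if w!(p-1) then Suc (Lc w (p-1)) else 0)" using assms by (intro Lc_rec) auto
  have 2: "Rc w p = (if w!(Suc p) then Suc (Rc w (Suc p)) else 0)" using assms by (intro Rc_rec) auto
  have 3: "Rc w (p-1) = (if w!p then Suc (Rc w p) else 0)" using assms Rc_rec[of "p-1" w] by auto
  have 4: "Lc w (Suc p) = (if w!p then Suc (Lc w p) else 0)" using assms Lc_rec[of "Suc p" w] by auto
  show ?thesis unfolding 3 4 unfolding 1 2 by (rule comb_arith)
qed

lemma main_char:
  "(\<forall>j. j + 2*t < length w \<longrightarrow> (eca_step 132 ^^ t) w ! j = (w!(j+t) \<and> min (Lc w (j+t)) t = min (Rc w (j+t)) t))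
   \<and> length ((eca_step 132 ^^ t) w) = length w - 2*t"
proof (induction t)
  case 0 then show ?case by simp
next
  case (Suc t)
  let ?u = "(eca_step 132 ^^ t) w"
  have len: "length ?u = length w - 2*t" using Suc by blast
  have IH: "\<And>j. j + 2*t < length w \<Longrightarrow> ?u ! j = (w!(j+t) \<and> min (Lc w (j+t)) t = min (Rc w (j+t)) t)"
    using Suc by blast
  show ?case
  proof (intro conjI allI impI)
    fix j assume j: "j + 2 * Suc t < length w"
    have "(eca_step 132 ^^ Suc t) w ! j = (?u!(j+1) \<and> (?u!j = ?u!(j+2)))"
      using j len by (simp add: step_nth)
    also have "\<dots> = ((w!(j+t+1) \<and> min (Lc w (j+t+1)) t = min (Rc w (j+t+1)) t) \<and>
      ((w!(j+t+1-1) \<and> min (Lc w (j+t+1-1)) t = min (Rc w (j+t+1-1)) t) =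
       (w!(Suc (j+t+1)) \<and> min (Lc w (Suc (j+t+1))) t = min (Rc w (Suc (j+t+1))) t)))"
      using j IH[of j] IH[of "j+1"] IH[of "j+2"] by (simp add: add.commute add.left_commute)
    also have "\<dots> = (w!(j+t+1) \<and> min (Lc w (j+t+1)) (Suc t) = min (Rc w (j+t+1)) (Suc t))"
      using j comb[of "j+t+1" w t] by simp
    finally show "(eca_step 132 ^^ Suc t) w ! j = (w!(j+Suc t) \<and> min (Lc w (j+Suc t)) (Suc t) = min (Rc w (j+Suc t)) (Suc t))"
      by simp
  next
    show "length ((eca_step 132 ^^ Suc t) w) = length w - 2 * Suc t" using len by (simp add: step_len)
  qed
qed

lemma pred_char: "length w = 2*n+1 \<Longrightarrow> pred 132 n w = (w!n \<and> min (Lc w n) n = min (Rc w n) n)"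
proof -
  assume l: "length w = 2*n+1"
  have "length ((eca_step 132 ^^ n) w) = 1" using main_char[of n w] l by simp
  then have "pred 132 n w = (eca_step 132 ^^ n) w ! 0" unfolding pred_def
    by (metis hd_conv_nth length_0_conv zero_neq_one)
  also have "\<dots> = (w!n \<and> min (Lc w n) n = min (Rc w n) n)" using main_char[of n w] l by simp
  finally show ?thesis .
qed

fun asend :: "nat \<Rightarrow> ('x \<Rightarrow> nat) \<Rightarrow> (nat \<Rightarrow> ('x,'y,'z) protocol) \<Rightarrow> nat \<Rightarrow> ('x,'y,'z) protocol" where
  "asend 0 s f acc = f acc"
| "asend (Suc k) s f acc = AliceNode (\<lambda>x. bit (s x) k) (asend k s f (acc + 2^k)) (asend k s f acc)"

fun bsend :: "nat \<Rightarrow> ('y \<Rightarrow> nat) \<Rightarrow> (nat \<Rightarrow> ('x,'y,'z) protocol) \<Rightarrow> nat \<Rightarrow> ('x,'y,'z) protocol" where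
  "bsend 0 s f acc = f acc"
| "bsend (Suc k) s f acc = BobNode (\<lambda>y. bit (s y) k) (bsend k s f (acc + 2^k)) (bsend k s f acc)"

lemma mod_split_bit: "(m::nat) mod (2 * 2^k) = 2^k * of_bool (bit m k) + m mod 2^k"
  using take_bit_Suc_from_most[of k m] by (simp add: take_bit_eq_mod)

lemma asend_run: "run (asend k s f acc) x y = run (f (acc + s x mod 2^k)) x y"
  by (induction k arbitrary: acc) (auto simp: mod_split_bit add.assoc)

lemma bsend_run: "run (bsend k s f acc) x y = run (f (acc + s y mod 2^k)) x y"
  by (induction k arbitrary: acc) (auto simp: mod_split_bit add.assoc)

lemma asend_depth: "(\<And>v. depth (f v) \<le> D) \<Longrightarrow> depth (asend k s f acc) \<le> k + D"
  by (induction k arbitrary: acc) auto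

lemma bsend_depth: "(\<And>v. depth (f v) \<le> D) \<Longrightarrow> depth (bsend k s f acc) \<le> k + D"
  by (induction k arbitrary: acc) auto

lemma cc_le: "(\<forall>x\<in>X. \<forall>y\<in>Y. run p x y = g x y) \<Longrightarrow> comm_complexity X Y g \<le> depth p"
  unfolding comm_complexity_def by (rule Least_le) blast

lemma cc_alice:
  fixes g :: "'x \<Rightarrow> 'y \<Rightarrow> bool" and s :: "'x \<Rightarrow> nat"
  assumes "\<forall>x\<in>X. s x < 2^k" "\<forall>x\<in>X. \<forall>y\<in>Y. g x y = h (s x) y"
  shows "comm_complexity X Y g \<le> Suc k"
proof -
  let ?p = "asend k s (\<lambda>v. BobNode (\<lambda>y. h v y) (Leaf True) (Leaf False)) 0 :: ('x,'y,bool) protocol"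
  have "\<forall>x\<in>X. \<forall>y\<in>Y. run ?p x y = g x y" using assms by (simp add: asend_run)
  then have "comm_complexity X Y g \<le> depth ?p" by (rule cc_le)
  also have "\<dots> \<le> k + 1" by (rule asend_depth) simp
  finally show ?thesis by simp
qed

lemma cc_bob:
  fixes g :: "'x \<Rightarrow> 'y \<Rightarrow> bool" and s :: "'y \<Rightarrow> nat"
  assumes "\<forall>y\<in>Y. s y < 2^k" "\<forall>x\<in>X. \<forall>y\<in>Y. g x y = h x (s y)"
  shows "comm_complexity X Y g \<le> Suc k"
proof -
  let ?p = "bsend k s (\<lambda>v. AliceNode (\<lambda>x. h x v) (Leaf True) (Leaf False)) 0 :: ('x,'y,bool) protocol"
  have "\<forall>x\<in>X. \<forall>y\<in>Y. run ?p x y = g x y" using assms by (simp add: bsend_run)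
  then have "comm_complexity X Y g \<le> depth ?p" by (rule cc_le)
  also have "\<dots> \<le> k + 1" by (rule bsend_depth) simp
  finally show ?thesis by simp
qed

lemma tw_len: "length (takeWhile P xs) \<le> length xs"
  by (simp add: length_takeWhile_le)

lemma split_left:
  assumes "length x = i" "i \<le> n" "length (x @ y) = 2*n+1"
  shows "pred 132 n (x @ y) = (y!(n-i) \<and> min (if (\<forall>b\<in>set (take (n-i) y). b) then n-i+length (takeWhile id (rev x))
          else length (takeWhile id (rev (take (n-i) y)))) n = min (length (takeWhile id (drop (Suc n - i) y))) n)"
proof -
  have 1: "(x@y)!n = y!(n-i)" using assms by (simp add: nth_append)
  have 2: "take n (x@y) = x @ take (n-i) y" using assms by simp
  have 3: "drop (Suc n) (x@y) = drop (Suc n - i) y" using assms by simp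
  have 4: "Lc (x@y) n = (if (\<forall>b\<in>set (take (n-i) y). b) then n-i+length (takeWhile id (rev x))
          else length (takeWhile id (rev (take (n-i) y))))"
  proof (cases "\<forall>b\<in>set (take (n-i) y). b")
    case True
    then have e: "takeWhile id (rev (take (n-i) y) @ rev x) = rev (take (n-i) y) @ takeWhile id (rev x)"
      by (intro takeWhile_append2) auto
    have "Lc (x@y) n = length (rev (take (n-i) y) @ takeWhile id (rev x))"
      unfolding Lc_def 2 rev_append e ..
    moreover have "length (take (n-i) y) = n - i" using assms by simp
    ultimately show ?thesis by (subst if_P[OF True]) simp
  next
    case False
    then obtain b where "b \<in> set (rev (take (n-i) y))" "\<not> id b" by auto
    then have e: "takeWhile id (rev (take (n-i) y) @ rev x) = takeWhile id (rev (take (n-i) y))"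
      by (rule takeWhile_append1)
    have "Lc (x@y) n = length (takeWhile id (rev (take (n-i) y)))"
      unfolding Lc_def 2 rev_append e ..
    then show ?thesis by (subst if_not_P[OF False]) simp
  qed
  have "pred 132 n (x@y) = ((x@y)!n \<and> min (Lc (x@y) n) n = min (Rc (x@y) n) n)"
    using assms(3) by (rule pred_char)
  then show ?thesis unfolding 1 4 Rc_def 3 .
qed

lemma split_right:
  assumes "length x = i" "n < i" "length (x @ y) = 2*n+1"
  shows "pred 132 n (x @ y) = (x!n \<and> min (Lc x n) n = min (if (\<forall>b\<in>set (drop (Suc n) x). b) then i - Suc n + length (takeWhile id y)
          else length (takeWhile id (drop (Suc n) x))) n)"
proof -
  have 1: "(x@y)!n = x!n" using assms by (simp add: nth_append)
  have 2: "Lc (x@y) n = Lc x n" using assms by (simp add: Lc_def)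
  have 3: "drop (Suc n) (x@y) = drop (Suc n) x @ y" using assms by simp
  have 4: "Rc (x@y) n = (if (\<forall>b\<in>set (drop (Suc n) x). b) then i - Suc n + length (takeWhile id y)
          else length (takeWhile id (drop (Suc n) x)))"
  proof (cases "\<forall>b\<in>set (drop (Suc n) x). b")
    case True
    then have e: "takeWhile id (drop (Suc n) x @ y) = drop (Suc n) x @ takeWhile id y"
      by (intro takeWhile_append2) auto
    have "Rc (x@y) n = length (drop (Suc n) x @ takeWhile id y)"
      unfolding Rc_def 3 e ..
    then show ?thesis using assms by (subst if_P[OF True]) simp
  next
    case False
    then obtain b where "b \<in> set (drop (Suc n) x)" "\<not> id b" by auto
    then have e: "takeWhile id (drop (Suc n) x @ y) = takeWhile id (drop (Suc n) x)"
      by (rule takeWhile_append1)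
    have "Rc (x@y) n = length (takeWhile id (drop (Suc n) x))"
      unfolding Rc_def 3 e ..
    then show ?thesis by (subst if_not_P[OF False]) simp
  qed
  have "pred 132 n (x@y) = ((x@y)!n \<and> min (Lc (x@y) n) n = min (Rc (x@y) n) n)"
    using assms(3) by (rule pred_char)
  then show ?thesis unfolding 1 2 4 .
qed

lemma split_bound:
  assumes "2*n+1 < (2::nat)^k" "i < 2*n+1"
  shows "comm_complexity {x. length x = i} {y. length y = 2*n+1 - i} (\<lambda>x y. pred 132 n (x @ y)) \<le> Suc k"
proof (cases "i \<le> n")
  case True
  show ?thesis
  proof (rule cc_alice[where s = "\<lambda>x. length (takeWhile id (rev x))"])
    show "\<forall>x\<in>{x. length x = i}. length (takeWhile id (rev x)) < 2^k"
    proof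
      fix x :: "bool list" assume "x \<in> {x. length x = i}"
      then show "length (takeWhile id (rev x)) < 2^k"
        using assms True tw_len[of id "rev x"] by simp
    qed
    show "\<forall>x\<in>{x. length x = i}. \<forall>y\<in>{y. length y = 2*n+1 - i}. pred 132 n (x @ y) =
      (\<lambda>v y. (y!(n-i) \<and> min (if (\<forall>b\<in>set (take (n-i) y). b) then n-i+v
          else length (takeWhile id (rev (take (n-i) y)))) n = min (length (takeWhile id (drop (Suc n - i) y))) n))
      (length (takeWhile id (rev x))) y"
    proof (intro ballI)
      fix x y :: "bool list" assume "x \<in> {x. length x = i}" "y \<in> {y. length y = 2*n+1 - i}"
      then show "pred 132 n (x @ y) =
      (\<lambda>v y. (y!(n-i) \<and> min (if (\<forall>b\<in>set (take (n-i) y). b) then n-i+v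
          else length (takeWhile id (rev (take (n-i) y)))) n = min (length (takeWhile id (drop (Suc n - i) y))) n))
      (length (takeWhile id (rev x))) y"
        using split_left[of x i n y] assms True by simp
    qed
  qed
next
  case False
  show ?thesis
  proof (rule cc_bob[where s = "\<lambda>y. length (takeWhile id y)"])
    show "\<forall>y\<in>{y. length y = 2*n+1 - i}. length (takeWhile id y) < 2^k"
    proof
      fix y :: "bool list" assume "y \<in> {y. length y = 2*n+1 - i}"
      then show "length (takeWhile id y) < 2^k"
        using assms tw_len[of id y] by simp
    qed
    show "\<forall>x\<in>{x. length x = i}. \<forall>y\<in>{y. length y = 2*n+1 - i}. pred 132 n (x @ y) =
      (\<lambda>x v. (x!n \<and> min (Lc x n) n = min (if (\<forall>b\<in>set (drop (Suc n) x). b) then i - Suc n + v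
          else length (takeWhile id (drop (Suc n) x))) n)) x (length (takeWhile id y))"
    proof (intro ballI)
      fix x y :: "bool list" assume "x \<in> {x. length x = i}" "y \<in> {y. length y = 2*n+1 - i}"
      then show "pred 132 n (x @ y) =
      (\<lambda>x v. (x!n \<and> min (Lc x n) n = min (if (\<forall>b\<in>set (drop (Suc n) x). b) then i - Suc n + v
          else length (takeWhile id (drop (Suc n) x))) n)) x (length (takeWhile id y))"
        using split_right[of x i n y] assms False by simp
    qed
  qed
qed

lemma wcc_bound:
  assumes "2*n+1 < (2::nat)^k"
  shows "word_comm_complexity (2*n+1) (pred 132 n) \<le> Suc k"
  unfolding word_comm_complexity_def using split_bound[OF assms]
  by (subst Max_le_iff) auto

lemma k_bound:
  fixes n :: nat
  defines "k \<equiv> nat \<lceil>log 2 (real (2*n+2))\<rceil>"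
  shows "2*n+1 < (2::nat)^k" and "real k \<le> log 2 (real (2*n+2)) + 1"
proof -
  have "real (2*n+2) = 2 powr (log 2 (real (2*n+2)))" by simp
  also have "\<dots> \<le> 2 powr (real k)"
    unfolding k_def by (intro powr_mono real_nat_ceiling_ge) auto
  also have "\<dots> = real (2^k)" by (simp add: powr_realpow)
  finally show "2*n+1 < (2::nat)^k" by linarith
  have "log 2 (real (2*n+2)) \<ge> 0" by simp
  then have "real k = of_int \<lceil>log 2 (real (2*n+2))\<rceil>" unfolding k_def by simp
  also have "\<dots> \<le> log 2 (real (2*n+2)) + 1" by (rule of_int_ceiling_le_add_one)
  finally show "real k \<le> log 2 (real (2*n+2)) + 1" .
qed

theorem mainTheorem17:
  shows "(\<lambda>n. real (word_comm_complexity (2 * n + 1) (pred 132 n))) \<in> O(\<lambda>n. ln (real n))"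
proof -
  have le: "real (word_comm_complexity (2 * n + 1) (pred 132 n)) \<le> log 2 (real (2*n+2)) + 2" for n
  proof -
    define k where "k = nat \<lceil>log 2 (real (2*n+2))\<rceil>"
    have "word_comm_complexity (2 * n + 1) (pred 132 n) \<le> Suc k"
      using wcc_bound k_bound(1) unfolding k_def by blast
    then have "real (word_comm_complexity (2 * n + 1) (pred 132 n)) \<le> real k + 1" by simp
    also have "\<dots> \<le> log 2 (real (2*n+2)) + 2" using k_bound(2)[of n] unfolding k_def by linarith
    finally show ?thesis .
  qed
  have "(\<lambda>n. real (word_comm_complexity (2 * n + 1) (pred 132 n))) \<in> O(\<lambda>n. log 2 (real (2*n+2)) + 2)"
  proof (rule landau_o.big_mono, rule always_eventually, rule allI)
    fix n :: nat
    have "log 2 (real (2*n+2)) \<ge> 0" by simp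
    then show "norm (real (word_comm_complexity (2 * n + 1) (pred 132 n))) \<le> norm (log 2 (real (2*n+2)) + 2)"
      using le[of n] by simp
  qed
  also have "(\<lambda>n. log 2 (real (2*n+2)) + 2) \<in> O(\<lambda>n. ln (real n))"
    by real_asymp
  finally show ?thesis .
qed

end
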